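(* Let $R$ be an associative ring with identity, let $a,b,c,y\in R$ and suppose $t=cab$ is regular. Then the following are equivalent: (i) $y$ is the $(b,c)$-inverse of $a$; (ii) $y$ is a hybrid $(b,c)$-inverse of $a$; (iii) $y$ is an annihilator $(b,c)$-inverse of $a$.
   Context: For $a,b,c\in R$, $y$ is the $(b,c)$-inverse of $a$ if $y\in (bRy)\cap(yRc)$, $yab=b$ and $cay=c$ (such $y$ is unique). $y$ is a hybrid $(b,c)$-inverse of $a$ if $yay=y$, $yR=bR$ and $r(y)=r(c)$. $y$ is an annihilator $(b,c)$-inverse of $a$ if $yay=y$, $l(y)=l(b)$ and $r(y)=r(c)$. Here $l(x)=\{z\in R:zx=0\}$, $r(x)=\{z\in R:xz=0\}$, $xR=\{xz:z\in R\}$. An element is regular if $x=xzx$ for some $z\in R$. *)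

theory Defs
  imports Main
begin

definition lann :: "'a::ring_1 \<Rightarrow> 'a set" where
  "lann x = {z. z * x = 0}"

definition rann :: "'a::ring_1 \<Rightarrow> 'a set" where
  "rann x = {z. x * z = 0}"

definition rideal :: "'a::ring_1 \<Rightarrow> 'a set" where
  "rideal x = {x * z | z. True}"

definition regular :: "'a::ring_1 \<Rightarrow> bool" where
  "regular x \<longleftrightarrow> (\<exists>z. x = x * z * x)"

definition bc_inverse :: "'a::ring_1 \<Rightarrow> 'a \<Rightarrow> 'a \<Rightarrow> 'a \<Rightarrow> bool" where
  "bc_inverse a b c y \<longleftrightarrow>
     (\<exists>r. y = b * r * y) \<and> (\<exists>s. y = y * s * c) \<and> y * a * b = b \<and> c * a * y = c"

definition hybrid_bc_inverse :: "'a::ring_1 \<Rightarrow> 'a \<Rightarrow> 'a \<Rightarrow> 'a \<Rightarrow> bool" where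
  "hybrid_bc_inverse a b c y \<longleftrightarrow>
     y * a * y = y \<and> rideal y = rideal b \<and> rann y = rann c"

definition annihilator_bc_inverse :: "'a::ring_1 \<Rightarrow> 'a \<Rightarrow> 'a \<Rightarrow> 'a \<Rightarrow> bool" where
  "annihilator_bc_inverse a b c y \<longleftrightarrow>
     y * a * y = y \<and> lann y = lann b \<and> rann y = rann c"

end

theory Submission
  imports Defs
begin

lemma i_ii:
  fixes a b c y :: "'a::ring_1"
  assumes "bc_inverse a b c y" shows "hybrid_bc_inverse a b c y"
proof -
  obtain r s where r: "y = b * r * y" and s: "y = y * s * c" and h1: "y * a * b = b" and h2: "c * a * y = c"
    using assms unfolding bc_inverse_def by blast
  have "y * a * y = y * a * b * r * y" using r by (metis mult.assoc)
  also have "\<dots> = y" using h1 r by simp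
  finally have yay: "y * a * y = y" .
  have "rideal y = rideal b"
  proof
    show "rideal y \<subseteq> rideal b" unfolding rideal_def
    proof clarify
      fix z show "\<exists>w. y * z = b * w \<and> True"
        by (rule exI[of _ "r * y * z"]) (metis r mult.assoc)
    qed
    show "rideal b \<subseteq> rideal y" unfolding rideal_def
    proof clarify
      fix z show "\<exists>w. b * z = y * w \<and> True"
        by (rule exI[of _ "a * b * z"]) (metis h1 mult.assoc)
    qed
  qed
  moreover have "rann y = rann c"
  proof
    show "rann y \<subseteq> rann c" unfolding rann_def
    proof clarify
      fix z assume "y * z = 0" then have "c * a * (y * z) = 0" by simp
      then show "c * z = 0" using h2 by (simp add: mult.assoc[symmetric])
    qed
    show "rann c \<subseteq> rann y" unfolding rann_def
    proof clarify
      fix z assume "c * z = 0" then have "y * s * (c * z) = 0" by simp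
      then show "y * z = 0" using s by (simp add: mult.assoc[symmetric])
    qed
  qed
  ultimately show ?thesis using yay unfolding hybrid_bc_inverse_def by blast
qed

lemma ii_iii:
  fixes a b c y :: "'a::ring_1"
  assumes "hybrid_bc_inverse a b c y" shows "annihilator_bc_inverse a b c y"
proof -
  have yay: "y * a * y = y" and ri: "rideal y = rideal b" and rc: "rann y = rann c"
    using assms unfolding hybrid_bc_inverse_def by auto
  have "y \<in> rideal y" unfolding rideal_def by (rule CollectI, rule exI[of _ 1], simp)
  hence "y \<in> rideal b" using ri by simp
  then obtain u where u: "y = b * u" unfolding rideal_def by auto
  have "b \<in> rideal b" unfolding rideal_def by (rule CollectI, rule exI[of _ 1], simp)
  hence "b \<in> rideal y" using ri by simp
  then obtain v where v: "b = y * v" unfolding rideal_def by auto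
  have "lann y = lann b"
  proof
    show "lann y \<subseteq> lann b" unfolding lann_def
    proof clarify
      fix z assume "z * y = 0" then have "z * y * v = 0" by simp
      then show "z * b = 0" using v by (simp add: mult.assoc)
    qed
    show "lann b \<subseteq> lann y" unfolding lann_def
    proof clarify
      fix z assume "z * b = 0" then have "z * b * u = 0" by simp
      then show "z * y = 0" using u by (simp add: mult.assoc)
    qed
  qed
  thus ?thesis using yay rc unfolding annihilator_bc_inverse_def by blast
qed

lemma iii_i:
  fixes a b c y :: "'a::ring_1"
  assumes reg: "regular (c * a * b)" and "annihilator_bc_inverse a b c y"
  shows "bc_inverse a b c y"
proof -
  have yay: "y * a * y = y" and la: "lann y = lann b" and rc: "rann y = rann c"
    using assms(2) unfolding annihilator_bc_inverse_def by auto
  obtain x where x: "c * a * b = c * a * b * x * (c * a * b)" using reg unfolding regular_def by blast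
  have "(1 - y * a) * y = 0" using yay by (simp add: algebra_simps)
  hence "(1 - y * a) * b = 0" using la unfolding lann_def by blast
  hence yab: "y * a * b = b" by (simp add: algebra_simps)
  have "y * (1 - a * y) = 0" using yay by (simp add: algebra_simps mult.assoc)
  hence "c * (1 - a * y) = 0" using rc unfolding rann_def by blast
  hence cay: "c * a * y = c" by (simp add: algebra_simps mult.assoc)
  have "c * (a * (b * x * (c * a * b) - b)) = 0" using x by (simp add: algebra_simps mult.assoc)
  hence "y * (a * (b * x * (c * a * b) - b)) = 0" using rc unfolding rann_def by blast
  hence "y * a * b * x * (c * a * b) = y * a * b" by (simp add: algebra_simps mult.assoc)
  hence bx: "b * x * c * a * b = b" using yab by (metis mult.assoc)
  hence "(b * x * c * a - 1) * b = 0" by (simp add: algebra_simps mult.assoc)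
  hence "(b * x * c * a - 1) * y = 0" using la unfolding lann_def by blast
  hence r: "y = b * (x * c * a) * y" by (simp add: algebra_simps mult.assoc)
  have "((c * a * b * x * c - c) * a) * b = 0" using x by (simp add: algebra_simps mult.assoc)
  hence "((c * a * b * x * c - c) * a) * y = 0" using la unfolding lann_def by blast
  hence "c * a * b * x * (c * a * y) = c * a * y" by (simp add: algebra_simps mult.assoc)
  hence cx: "c * a * b * x * c = c" using cay by simp
  hence "c * (1 - a * b * x * c) = 0" by (simp add: algebra_simps mult.assoc)
  hence "y * (1 - a * b * x * c) = 0" using rc unfolding rann_def by blast
  hence s: "y = y * (a * b * x) * c" by (simp add: algebra_simps mult.assoc)
  show ?thesis unfolding bc_inverse_def using r s yab cay by blast
qed

theorem theorem3p10:
  fixes a b c y :: "'a::ring_1"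
  assumes "regular (c * a * b)"
  shows "(bc_inverse a b c y \<longleftrightarrow> hybrid_bc_inverse a b c y) \<and>
         (hybrid_bc_inverse a b c y \<longleftrightarrow> annihilator_bc_inverse a b c y)"
  using i_ii ii_iii iii_i[OF assms] by blast

end
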